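(* Let $\mathbb{K}$ be a field of characteristic zero with algebraic closure $\overline{\mathbb{K}}$. Let $G(x,y)\in \mathbb{K}[x,y]$ be an irreducible polynomial with $d_x=\deg_x G$ and $d_y=\deg_y G$. Let $y(x)\in\overline{\mathbb{K}}((x))^*$ be a formal Puiseux series, expanded at $x=0$, satisfying $G(x,y(x))=0$, and let $\nu=\operatorname{ord}_x(y(x))$ and $\nu'=\min\{\nu,0\}$. Write $y(x)=\bar{y}(x)+\varphi(x)$ with $\bar{y}(x),\varphi(x)\in\overline{\mathbb{K}}((x))^*$ and $\operatorname{ord}_x(\varphi(x))>N>0$, where $$N\geq 2\,d_x\,d_y-2\,\nu'\,(d_y-1).$$ Assume that $A(x,y)\in\mathbb{K}[x,y]$ is a nonzero polynomial with $\deg_x A\leq d_x$ and $\deg_y A\leq d_y$ which is of minimal degree such that $$\operatorname{ord}_x\big(A(x,\bar{y}(x))\big)> 2\,d_x\,d_y-\nu'\,(d_y-1).$$ Then $A(x,y)$ is, up to a nonzero constant factor, equal to $G(x,y)$.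
   Context: For a field $\mathbb{L}$, $\mathbb{L}((x))^*=\bigcup_{n\geq 1}\mathbb{L}((x^{1/n}))$ denotes the field of formal Puiseux series expanded at $0$. For a nonzero Puiseux series $\varphi(x)=\sum_{j\geq j_0}a_j x^{j/n}$ with $a_{j_0}\neq 0$, its order is $\operatorname{ord}_x(\varphi)=j_0/n\in\mathbb{Q}$; and $\operatorname{ord}_x(0)=\infty$. *)

theory Defs
  imports "HOL-Computational_Algebra.Computational_Algebra" "HOL-Library.Extended_Real"
begin

text \<open>Bivariate polynomials K[x,y] are represented as \<open>'a poly poly\<close>:
  the outer variable is y, the coefficients are polynomials in x.\<close>

definition deg_x :: "'a::zero poly poly \<Rightarrow> nat" where
  "deg_x A = Max ((\<lambda>j. degree (coeff A j)) ` {..degree A})"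

abbreviation deg_y :: "'a::zero poly poly \<Rightarrow> nat" where
  "deg_y A \<equiv> degree A"

definition tot_deg :: "'a::zero poly poly \<Rightarrow> nat" where
  "tot_deg A = Max ({0} \<union> {i + j | i j. coeff (coeff A j) i \<noteq> 0})"

definition is_alg_closure_emb :: "('a::field \<Rightarrow> 'b::field) \<Rightarrow> bool" where
  "is_alg_closure_emb h \<longleftrightarrow>
     inj h \<and> h 1 = 1 \<and> (\<forall>a b. h (a + b) = h a + h b) \<and> (\<forall>a b. h (a * b) = h a * h b) \<and>
     (\<forall>p :: 'b poly. degree p > 0 \<longrightarrow> (\<exists>z. poly p z = 0)) \<and>
     (\<forall>z :: 'b. \<exists>p :: 'a poly. p \<noteq> 0 \<and> poly (map_poly h p) z = 0)"

text \<open>A Puiseux series in \<open>L((x))^*\<close> with denominator \<open>n \<ge> 1\<close> is represented by a formal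
  Laurent series \<open>F\<close> in \<open>t = x^(1/n)\<close>, i.e. it is \<open>F(x^(1/n))\<close>.\<close>
definition eval_puiseux ::
  "('a::field \<Rightarrow> 'b::field) \<Rightarrow> nat \<Rightarrow> 'a poly poly \<Rightarrow> 'b fls \<Rightarrow> 'b fls" where
  "eval_puiseux h n A F =
     (\<Sum>j\<le>degree A. (\<Sum>i\<le>degree (coeff A j).
         fls_const (h (coeff (coeff A j) i)) * fls_X ^ (n * i)) * F ^ j)"

text \<open>Order in x of the Puiseux series \<open>F(x^(1/n))\<close>; order of 0 is \<open>\<infinity>\<close>.\<close>
definition ord_x :: "nat \<Rightarrow> 'b::zero fls \<Rightarrow> ereal" where
  "ord_x n F = (if F = 0 then \<infinity> else ereal (real_of_int (fls_subdegree F) / real n))"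

end

theory Submission
  imports Defs "Jordan_Normal_Form.Char_Poly"
begin
hide_const (open) Module.module.smult

definition hc :: "('a::field \<Rightarrow> 'b::field) \<Rightarrow> 'a \<Rightarrow> 'b fls" where "hc h c = fls_const (h c)"
definition phi :: "('a::field \<Rightarrow> 'b::field) \<Rightarrow> nat \<Rightarrow> 'a poly \<Rightarrow> 'b fls" where
  "phi h n p = eval_poly (hc h) p (fls_X ^ n)"

lemma emb_hom: assumes "is_alg_closure_emb h" shows "inj_comm_ring_hom h"
proof -
  from assms have i: "inj h" and o: "h 1 = 1" and a: "\<And>a b. h (a + b) = h a + h b"
    and m: "\<And>a b. h (a * b) = h a * h b" unfolding is_alg_closure_emb_def by auto
  have z: "h 0 = 0" using a[of 0 0] by (metis add_cancel_right_right)
  show ?thesis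
    by (unfold_locales, auto simp: o a m z) (metis i injD z)
qed

lemma hc_hom: assumes "inj_comm_ring_hom h" shows "inj_comm_ring_hom (hc h)"
proof -
  interpret inj_comm_ring_hom h by fact
  show ?thesis
    by (unfold_locales, auto simp: hc_def hom_distribs fls_plus_const)
qed

lemma eval_poly_hom: assumes "comm_ring_hom f" shows "comm_ring_hom (\<lambda>p. eval_poly f p x)"
proof -
  interpret b: comm_ring_hom f by fact
  interpret mp: map_poly_comm_ring_hom f ..
  show ?thesis
    by (unfold_locales, auto simp: eval_poly_def mp.hom_add mp.hom_mult mp.hom_uminus)
qed

lemma phi_hom: assumes "inj_comm_ring_hom h" shows "comm_ring_hom (phi h n)"
proof -
  interpret inj_comm_ring_hom "hc h" using hc_hom[OF assms] .
  show ?thesis unfolding phi_def[abs_def]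
    by (rule eval_poly_hom, unfold_locales)
qed

lemma phi_sum: assumes "inj_comm_ring_hom h"
  shows "phi h n p = (\<Sum>i\<le>degree p. fls_const (h (coeff p i)) * fls_X ^ (n * i))"
proof -
  interpret inj_comm_ring_hom h by fact
  show ?thesis unfolding phi_def
    by (subst eval_poly_as_sum, simp add: hc_def, rule sum.cong, simp_all add: hc_def power_mult mult.commute[of "fls_X ^ n ^ _"])
qed

lemma eval_puiseux_eq: assumes "inj_comm_ring_hom h"
  shows "eval_puiseux h n P F = eval_poly (phi h n) P F"
proof -
  interpret comm_ring_hom "phi h n" using phi_hom[OF assms] .
  show ?thesis unfolding eval_puiseux_def
    by (subst eval_poly_as_sum, simp, rule sum.cong, auto simp: phi_sum[OF assms] mult.commute)
qed

definition ordge :: "'b::field fls \<Rightarrow> int \<Rightarrow> bool" where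
  "ordge f k \<longleftrightarrow> f = 0 \<or> k \<le> fls_subdegree f"
definition ordgt :: "'b::field fls \<Rightarrow> real \<Rightarrow> bool" where
  "ordgt f c \<longleftrightarrow> f = 0 \<or> c < real_of_int (fls_subdegree f)"

lemma ordge_mono: "ordge f k \<Longrightarrow> k' \<le> k \<Longrightarrow> ordge f k'"
  unfolding ordge_def by auto
lemma ordgt_mono: "ordgt f c \<Longrightarrow> c' \<le> c \<Longrightarrow> ordgt f c'"
  unfolding ordgt_def by auto
lemma ordge_0[simp]: "ordge 0 k" unfolding ordge_def by auto
lemma ordgt_0[simp]: "ordgt 0 k" unfolding ordgt_def by auto

lemma ordge_add: "ordge f k \<Longrightarrow> ordge g k \<Longrightarrow> ordge (f + g) k"
  unfolding ordge_def using fls_plus_subdegree[of f g] by force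
lemma ordge_uminus: "ordge f k \<Longrightarrow> ordge (- f) k"
  unfolding ordge_def by auto
lemma ordge_diff: "ordge f k \<Longrightarrow> ordge g k \<Longrightarrow> ordge (f - g) k"
  using ordge_add[of f k "- g"] ordge_uminus[of g k] by simp
lemma ordgt_add: "ordgt f k \<Longrightarrow> ordgt g k \<Longrightarrow> ordgt (f + g) k"
  unfolding ordgt_def using fls_plus_subdegree[of f g] by force
lemma ordge_mult: "ordge f a \<Longrightarrow> ordge g b \<Longrightarrow> ordge (f * g) (a + b)"
  unfolding ordge_def by (cases "f = 0 \<or> g = 0") (auto simp: fls_subdegree_mult)
lemma ordgt_mult: "ordgt f c \<Longrightarrow> ordge g b \<Longrightarrow> ordgt (f * g) (c + b)"
  unfolding ordgt_def ordge_def by (cases "f = 0 \<or> g = 0") (auto simp: fls_subdegree_mult)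
lemma ordge_sum: "(\<And>i. i \<in> A \<Longrightarrow> ordge (f i) k) \<Longrightarrow> ordge (sum f A) k"
  by (induct A rule: infinite_finite_induct, auto intro: ordge_add)
lemma ordgt_sum: "(\<And>i. i \<in> A \<Longrightarrow> ordgt (f i) k) \<Longrightarrow> ordgt (sum f A) k"
  by (induct A rule: infinite_finite_induct, auto intro: ordgt_add)
lemma ordge_power: "ordge f a \<Longrightarrow> ordge (f ^ j) (int j * a)"
proof (induct j)
  case 0 then show ?case by (simp add: ordge_def)
next
  case (Suc j) then show ?case using ordge_mult[of f a "f ^ j" "int j * a"] by (simp add: algebra_simps)
qed
lemma ordge_const: "ordge (fls_const c) 0" unfolding ordge_def by simp
lemma ordge_X_pow: "ordge ((fls_X :: 'b::field fls) ^ k) (int k)" unfolding ordge_def by simp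

lemma phi_ordge: assumes "inj_comm_ring_hom h" shows "ordge (phi h n p) 0"
  unfolding phi_sum[OF assms]
  by (rule ordge_sum, rule ordge_mono[OF ordge_mult[OF ordge_const ordge_X_pow]], simp)

lemma phi_nth: assumes "inj_comm_ring_hom h" and n: "n \<ge> 1"
  shows "fls_nth (phi h n p) (int (n * degree p)) = h (lead_coeff p)"
proof -
  have "fls_nth (phi h n p) (int (n * degree p)) =
     (\<Sum>i\<le>degree p. (if i = degree p then h (coeff p i) else 0))"
    unfolding phi_sum[OF assms(1)] fls_nth_sum
    by (rule sum.cong, use n in auto)
  also have "\<dots> = h (lead_coeff p)" by simp
  finally show ?thesis .
qed

lemma phi_nz: assumes "inj_comm_ring_hom h" and n: "n \<ge> 1" and p: "p \<noteq> 0"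
  shows "phi h n p \<noteq> 0" "fls_subdegree (phi h n p) \<le> int (n * degree p)"
proof -
  interpret inj_comm_ring_hom h by fact
  have "fls_nth (phi h n p) (int (n * degree p)) \<noteq> 0" unfolding phi_nth[OF assms(1) n] using p by simp
  then show "phi h n p \<noteq> 0" "fls_subdegree (phi h n p) \<le> int (n * degree p)"
    by (auto intro: fls_subdegree_leI)
qed

lemma ev_ordge: assumes "inj_comm_ring_hom h" and "degree P \<le> k" and "ordge F mu" and "mu \<le> 0"
  shows "ordge (eval_poly (phi h n) P F) (int k * mu)"
proof -
  interpret comm_ring_hom "phi h n" using phi_hom[OF assms(1)] .
  show ?thesis
    unfolding eval_poly_as_sum[of "phi h n", OF hom_zero]
  proof (rule ordge_sum)
    fix i assume i: "i \<in> {..degree P}"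
    have "ordge (F ^ i * phi h n (coeff P i)) (int i * mu + 0)"
      by (rule ordge_mult[OF ordge_power[OF assms(3)] phi_ordge[OF assms(1)]])
    moreover have "int k * mu \<le> int i * mu + 0" using i assms(2,4)
      by (simp add: mult_right_mono_neg)
    ultimately show "ordge (F ^ i * phi h n (coeff P i)) (int k * mu)" by (rule ordge_mono)
  qed
qed


definition ee :: "'c::zero poly \<Rightarrow> 'c poly \<Rightarrow> nat \<Rightarrow> nat \<Rightarrow> nat \<Rightarrow> 'c" where
  "ee A G d i k = (if i < d then (if i \<le> k then coeff A (k - i) else 0)
                   else (if i - d \<le> k then coeff G (k - (i - d)) else 0))"
definition UU :: "nat \<Rightarrow> (nat \<Rightarrow> 'c::comm_ring_1) \<Rightarrow> 'c poly" where
  "UU d u = (\<Sum>i<d. monom (u i) i)"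
definition VV :: "nat \<Rightarrow> nat \<Rightarrow> (nat \<Rightarrow> 'c::comm_ring_1) \<Rightarrow> 'c poly" where
  "VV d m u = (\<Sum>j<m. monom (u (d + j)) j)"
definition MM :: "'c::comm_ring_1 poly \<Rightarrow> 'c poly \<Rightarrow> nat \<Rightarrow> nat \<Rightarrow> 'c mat" where
  "MM A G d m = mat (d + m) (d + m) (\<lambda>(k, i). ee A G d i k)"

lemma coeff_UU: "coeff (UU d u) k = (if k < d then u k else 0)"
  unfolding UU_def coeff_sum coeff_monom by (simp add: sum.delta)

lemma coeff_VV: "coeff (VV d m u) k = (if k < m then u (d + k) else 0)"
  unfolding VV_def coeff_sum coeff_monom by (simp add: sum.delta)

lemma sum_split_add: "(\<Sum>i<d + (m::nat). f i) = (\<Sum>i<d. f i) + (\<Sum>j<m. f (d + j))"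
  by (induct m, auto simp: add.assoc)

lemma coeff_comb:
  "coeff (UU d u * A + VV d m u * G) k = (\<Sum>i<d + m. u i * ee A G d i k)"
proof -
  have 1: "coeff (UU d u * A) k = (\<Sum>i<d. u i * ee A G d i k)"
    unfolding UU_def sum_distrib_right coeff_sum coeff_monom_mult
    by (rule sum.cong, auto simp: ee_def)
  have 2: "coeff (VV d m u * G) k = (\<Sum>j<m. u (d + j) * ee A G d (d + j) k)"
    unfolding VV_def sum_distrib_right coeff_sum coeff_monom_mult
    by (rule sum.cong, auto simp: ee_def)
  show ?thesis unfolding coeff_add 1 2 sum_split_add ..
qed

lemma ee_vanish: assumes "degree A \<le> m" "degree G \<le> d" "i < d + m" "d + m \<le> k"
  shows "ee A G d i k = 0"
  using assms unfolding ee_def by (auto intro!: coeff_eq_0)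

lemma R1: fixes A G :: "'c::idom poly"
  assumes "degree A \<le> m" "degree G \<le> d" "d \<ge> 1"
  shows "\<exists>U V. U * A + V * G = [:det (MM A G d m):] \<and> (\<forall>k\<ge>d. coeff U k = 0)"
proof -
  let ?N = "d + m"
  let ?M = "MM A G d m"
  have car: "?M \<in> carrier_mat ?N ?N" unfolding MM_def by simp
  define adj where "adj = adj_mat ?M"
  note adj = adj_mat[OF car, folded adj_def]
  define u where "u i = adj $$ (i, 0)" for i
  show ?thesis
  proof (intro exI conjI)
    show "UU d u * A + VV d m u * G = [:det ?M:]"
    proof (rule poly_eqI)
      fix k
      show "coeff (UU d u * A + VV d m u * G) k = coeff [:det ?M:] k"
      proof (cases "k < ?N")
        case True
        have "(?M * adj) $$ (k, 0) = (det ?M \<cdot>\<^sub>m 1\<^sub>m ?N) $$ (k, 0)" using adj(2) by simp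
        also have "\<dots> = (if k = 0 then det ?M else 0)" using True assms(3) by simp
        also have "(?M * adj) $$ (k, 0) = (\<Sum>i<?N. u i * ee A G d i k)"
          using True assms(3) adj(1) car
          by (auto simp: scalar_prod_def u_def MM_def atLeast0LessThan mult.commute intro!: sum.cong)
        finally show ?thesis unfolding coeff_comb by (auto simp: coeff_pCons split: nat.split)
      next
        case False
        then show ?thesis unfolding coeff_comb using ee_vanish[OF assms(1,2)] assms(3)
          by (auto simp: coeff_pCons split: nat.split)
      qed
    qed
    show "\<forall>k\<ge>d. coeff (UU d u) k = 0" by (simp add: coeff_UU)
  qed
qed

lemma R2: fixes A G :: "'c::idom poly"
  assumes "degree A \<le> m" "degree G \<le> d" "G \<noteq> 0" and det: "det (MM A G d m) = 0"
  shows "\<exists>U V. U * A + V * G = 0 \<and> U \<noteq> 0 \<and> (\<forall>k\<ge>d. coeff U k = 0)"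
proof -
  let ?N = "d + m"
  let ?M = "MM A G d m"
  have car: "?M \<in> carrier_mat ?N ?N" unfolding MM_def by simp
  from det det_0_iff_vec_prod_zero[OF car] obtain v where
    v: "v \<in> carrier_vec ?N" "v \<noteq> 0\<^sub>v ?N" "?M *\<^sub>v v = 0\<^sub>v ?N" by auto
  define u where "u i = v $ i" for i
  have comb: "UU d u * A + VV d m u * G = 0"
  proof (rule poly_eqI)
    fix k
    show "coeff (UU d u * A + VV d m u * G) k = coeff 0 k"
    proof (cases "k < ?N")
      case True
      have "(?M *\<^sub>v v) $ k = 0" using v(3) True by simp
      moreover have "(?M *\<^sub>v v) $ k = (\<Sum>i<?N. u i * ee A G d i k)"
        using True v(1)
        by (auto simp: scalar_prod_def u_def MM_def atLeast0LessThan mult.commute intro!: sum.cong)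
      ultimately show ?thesis unfolding coeff_comb by simp
    next
      case False
      then show ?thesis unfolding coeff_comb using ee_vanish[OF assms(1,2)] by auto
    qed
  qed
  from v(1,2) obtain i where i: "i < ?N" "u i \<noteq> 0" unfolding u_def by (auto simp: vec_eq_iff)
  have U: "UU d u \<noteq> 0"
  proof
    assume U0: "UU d u = 0"
    show False
    proof (cases "i < d")
      case True then show False using U0 i coeff_UU[of d u i] by simp
    next
      case False
      with comb U0 have "VV d m u * G = 0" by simp
      with assms(3) have "VV d m u = 0" by simp
      then have "coeff (VV d m u) (i - d) = 0" by simp
      moreover have "d + (i - d) = i" using False by simp
      ultimately show False using False i unfolding coeff_VV by auto
    qed
  qed
  show ?thesis using comb U by (intro exI[of _ "UU d u"] exI[of _ "VV d m u"], auto simp: coeff_UU)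
qed

lemma R3: fixes A G :: "'c::idom poly poly"
  assumes "\<And>j. degree (coeff A j) \<le> D" "\<And>j. degree (coeff G j) \<le> D"
  shows "degree (det (MM A G d m)) \<le> D * (d + m)"
  by (rule degree_det_le, auto simp: MM_def ee_def assms)


lemma minpoly_dvd:
  fixes h :: "'a::field \<Rightarrow> 'b::field"
  assumes hh: "inj_comm_ring_hom h" and c: "c \<noteq> 0" and ca: "poly (map_poly h c) a = 0"
  shows "\<exists>m. degree m \<ge> 1 \<and> m dvd c \<and> (\<forall>p. m dvd p \<longleftrightarrow> poly (map_poly h p) a = 0)"
proof -
  interpret b: inj_comm_ring_hom h by fact
  interpret mp: map_poly_inj_comm_ring_hom h ..
  define S where "S = {k. \<exists>p. p \<noteq> 0 \<and> poly (map_poly h p) a = 0 \<and> degree p = k}"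
  have "degree c \<in> S" using c ca unfolding S_def by auto
  then have "(LEAST k. k \<in> S) \<in> S" by (rule LeastI)
  then obtain m where m: "m \<noteq> 0" "poly (map_poly h m) a = 0" "degree m = (LEAST k. k \<in> S)"
    unfolding S_def by auto
  have iff: "m dvd p \<longleftrightarrow> poly (map_poly h p) a = 0" for p
  proof
    assume "m dvd p" then obtain k where "p = m * k" by (rule dvdE)
    then show "poly (map_poly h p) a = 0" using m(2) by (simp add: mp.hom_mult)
  next
    assume pa: "poly (map_poly h p) a = 0"
    have "p = m * (p div m) + p mod m" by simp
    then have "poly (map_poly h p) a = poly (map_poly h m) a * poly (map_poly h (p div m)) a
       + poly (map_poly h (p mod m)) a"
      by (metis mp.hom_add mp.hom_mult poly_add poly_mult)
    with pa m(2) have r: "poly (map_poly h (p mod m)) a = 0" by simp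
    show "m dvd p"
    proof (rule ccontr)
      assume "\<not> m dvd p"
      then have "p mod m \<noteq> 0" by (simp add: dvd_eq_mod_eq_0)
      with degree_mod_less[OF m(1), of p] have "degree (p mod m) < degree m" by auto
      moreover have "degree (p mod m) \<in> S" using r \<open>p mod m \<noteq> 0\<close> unfolding S_def by auto
      ultimately show False using m(3) by (metis not_less_Least)
    qed
  qed
  have "degree m \<ge> 1"
  proof (rule ccontr)
    assume "\<not> degree m \<ge> 1"
    then have "degree m = 0" by simp
    then obtain m0 where "m = [:m0:]" by (metis degree_0_id)
    with m(1,2) show False by simp
  qed
  then show ?thesis using iff c ca by blast
qed

lemma prime_factor:
  fixes h :: "'a::field \<Rightarrow> 'b::field" and c :: "'a poly"
  assumes hh: "inj_comm_ring_hom h" and closed: "\<forall>p :: 'b poly. degree p > 0 \<longrightarrow> (\<exists>z. poly p z = 0)"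
    and c: "c \<noteq> 0" "degree c \<ge> 1"
  shows "\<exists>m. degree m \<ge> 1 \<and> m dvd c \<and> (\<forall>Q W :: 'a poly poly. (\<forall>j. m dvd coeff (Q * W) j) \<longrightarrow>
           (\<forall>j. m dvd coeff Q j) \<or> (\<forall>j. m dvd coeff W j))"
proof -
  interpret b: inj_comm_ring_hom h by fact
  interpret mp: map_poly_inj_comm_ring_hom h ..
  have "degree (map_poly h c) > 0" using c by simp
  with closed obtain a where a: "poly (map_poly h c) a = 0" by blast
  from minpoly_dvd[OF hh c(1) a] obtain m where
    m: "degree m \<ge> 1" "m dvd c" "\<And>p. m dvd p \<longleftrightarrow> poly (map_poly h p) a = 0" by auto
  define ea where "ea p = eval_poly h p a" for p
  have "comm_ring_hom ea" unfolding ea_def[abs_def] by (rule eval_poly_hom, unfold_locales)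
  then interpret ea: comm_ring_hom ea .
  interpret mea: map_poly_comm_ring_hom ea ..
  have z: "(\<forall>j. m dvd coeff P j) \<longleftrightarrow> map_poly ea P = 0" for P
    unfolding poly_eq_iff by (simp add: m(3) ea_def eval_poly_def)
  show ?thesis
  proof (intro exI[of _ m] conjI m(1,2) allI impI)
    fix Q W :: "'a poly poly"
    assume "\<forall>j. m dvd coeff (Q * W) j"
    then have "map_poly ea Q * map_poly ea W = 0" unfolding z mea.hom_mult .
    then show "(\<forall>j. m dvd coeff Q j) \<or> (\<forall>j. m dvd coeff W j)" unfolding z by simp
  qed
qed

lemma divide_out: fixes m :: "'a::field poly" and Q :: "'a poly poly"
  assumes "\<forall>j. m dvd coeff Q j" shows "Q = smult m (map_poly (\<lambda>p. p div m) Q)"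
  by (rule poly_eqI, simp add: coeff_map_poly assms)

lemma unit_deg0: fixes P :: "'a::field poly poly" assumes "is_unit P" shows "degree P = 0"
  using dvd_imp_degree_le[OF assms] by simp

lemma unit_const: fixes m :: "'a::field poly" assumes "is_unit [:m:]" shows "degree m = 0"
proof -
  from assms have "[:m:] dvd 1" by simp
  then obtain z where "1 = [:m:] * z" by (rule dvdE)
  then have "coeff 1 0 = coeff ([:m:] * z) 0" by simp
  then have "1 = m * coeff z 0" by simp
  then have "m dvd 1" by (metis dvdI)
  from dvd_imp_degree_le[OF this] show ?thesis by simp
qed

lemma cancel1:
  fixes h :: "'a::field \<Rightarrow> 'b::field" and G :: "'a poly poly"
  assumes hh: "inj_comm_ring_hom h" and closed: "\<forall>p :: 'b poly. degree p > 0 \<longrightarrow> (\<exists>z. poly p z = 0)"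
    and irr: "irreducible G"
  shows "c \<noteq> 0 \<Longrightarrow> smult c G = Q * W \<Longrightarrow> degree Q = 0 \<or> degree W = 0"
proof (induct "degree c" arbitrary: c Q W rule: less_induct)
  case less
  show ?case
  proof (cases "degree c = 0")
    case True
    then obtain k where k: "c = [:k:]" by (metis degree_0_id)
    with less have k0: "k \<noteq> 0" by auto
    have "G = smult [:inverse k:] (smult c G)" using k k0 by (simp add: one_pCons[symmetric])
    also have "\<dots> = smult [:inverse k:] Q * W" using less(3) by simp
    finally have "is_unit (smult [:inverse k:] Q) \<or> is_unit W" using irr by (simp add: irreducible_def)
    then show ?thesis using k0 by (auto dest!: unit_deg0)
  next
    case False
    from prime_factor[OF hh closed less(2)] False obtain m where
      m: "degree m \<ge> 1" "m dvd c" and pr: "\<And>Q W :: 'a poly poly. (\<forall>j. m dvd coeff (Q * W) j) \<Longrightarrow>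
           (\<forall>j. m dvd coeff Q j) \<or> (\<forall>j. m dvd coeff W j)" by auto
    from m(2) obtain c' where c': "c = m * c'" by (rule dvdE)
    have m0: "m \<noteq> 0" using m(1) by auto
    have c'0: "c' \<noteq> 0" using less(2) c' by auto
    have dc: "degree c' < degree c" using c' m(1) m0 c'0 by (simp add: degree_mult_eq)
    have "\<forall>j. m dvd coeff (Q * W) j" unfolding less(3)[symmetric] using c' by simp
    from pr[OF this] show ?thesis
    proof
      assume "\<forall>j. m dvd coeff Q j"
      note Q' = divide_out[OF this]
      define Q'' where "Q'' = map_poly (\<lambda>p. p div m) Q"
      have "smult m (smult c' G) = smult m (Q'' * W)" using less(3) c' Q'[folded Q''_def]
        by (metis mult_smult_left smult_smult)
      then have "smult c' G = Q'' * W" by (rule smult_cancel[OF m0])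
      from less(1)[OF dc c'0 this] show ?thesis using Q'[folded Q''_def] m0 by auto
    next
      assume "\<forall>j. m dvd coeff W j"
      note W' = divide_out[OF this]
      define W'' where "W'' = map_poly (\<lambda>p. p div m) W"
      have "smult m (smult c' G) = smult m (Q * W'')" using less(3) c' W'[folded W''_def]
        by (metis mult_smult_right smult_smult)
      then have "smult c' G = Q * W''" by (rule smult_cancel[OF m0])
      from less(1)[OF dc c'0 this] show ?thesis using W'[folded W''_def] m0 by auto
    qed
  qed
qed

lemma cancel2:
  fixes h :: "'a::field \<Rightarrow> 'b::field" and G :: "'a poly poly"
  assumes hh: "inj_comm_ring_hom h" and closed: "\<forall>p :: 'b poly. degree p > 0 \<longrightarrow> (\<exists>z. poly p z = 0)"
    and irr: "irreducible G" and dG: "degree G \<ge> 1"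
  shows "w \<noteq> 0 \<Longrightarrow> smult w A = Q * G \<Longrightarrow> G dvd A"
proof (induct "degree w" arbitrary: w Q rule: less_induct)
  case less
  show ?case
  proof (cases "degree w = 0")
    case True
    then obtain k where k: "w = [:k:]" by (metis degree_0_id)
    with less have k0: "k \<noteq> 0" by auto
    have "A = smult [:inverse k:] (smult w A)" using k k0 by (simp add: one_pCons[symmetric])
    also have "\<dots> = smult [:inverse k:] Q * G" using less(3) by simp
    finally have "A = G * smult [:inverse k:] Q" by (simp add: mult.commute)
    then show ?thesis by (rule dvdI)
  next
    case False
    from prime_factor[OF hh closed less(2)] False obtain m where
      m: "degree m \<ge> 1" "m dvd w" and pr: "\<And>Q W :: 'a poly poly. (\<forall>j. m dvd coeff (Q * W) j) \<Longrightarrow>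
           (\<forall>j. m dvd coeff Q j) \<or> (\<forall>j. m dvd coeff W j)" by auto
    from m(2) obtain w' where w': "w = m * w'" by (rule dvdE)
    have m0: "m \<noteq> 0" using m(1) by auto
    have w'0: "w' \<noteq> 0" using less(2) w' by auto
    have dw: "degree w' < degree w" using w' m(1) m0 w'0 by (simp add: degree_mult_eq)
    have "\<forall>j. m dvd coeff (Q * G) j" unfolding less(3)[symmetric] using w' by simp
    from pr[OF this] show ?thesis
    proof
      assume "\<forall>j. m dvd coeff Q j"
      note Q' = divide_out[OF this]
      define Q'' where "Q'' = map_poly (\<lambda>p. p div m) Q"
      have "smult m (smult w' A) = smult m (Q'' * G)" using less(3) w' Q'[folded Q''_def]
        by (metis mult_smult_left smult_smult)
      then have "smult w' A = Q'' * G" by (rule smult_cancel[OF m0])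
      from less(1)[OF dw w'0 this] show ?thesis .
    next
      assume "\<forall>j. m dvd coeff G j"
      note G' = divide_out[OF this]
      define G'' where "G'' = map_poly (\<lambda>p. p div m) G"
      have "G = [:m:] * G''" using G'[folded G''_def] by simp
      then have "is_unit [:m:] \<or> is_unit G''" by (rule irreducibleD[OF irr])
      moreover have "degree G'' = degree G" using G'[folded G''_def] m0 by (metis degree_smult_eq)
      ultimately show ?thesis using unit_const[of m] unit_deg0[of G''] m(1) dG by auto
    qed
  qed
qed

lemma final_dvd:
  fixes h :: "'a::field \<Rightarrow> 'b::field" and G A U V :: "'a poly poly"
  assumes hh: "inj_comm_ring_hom h" and closed: "\<forall>p :: 'b poly. degree p > 0 \<longrightarrow> (\<exists>z. poly p z = 0)"
    and irr: "irreducible G" and dG: "degree G \<ge> 1"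
    and UV: "U * A + V * G = 0" "U \<noteq> 0" "degree U < degree G"
  shows "G dvd A"
proof -
  define S where "S = {k. \<exists>P. P \<noteq> 0 \<and> G dvd P * A \<and> degree P = k}"
  have "U * A = - (V * G)" using UV(1) by (simp add: eq_neg_iff_add_eq_0)
  then have "U * A = G * (- V)" by simp
  then have "G dvd U * A" by (rule dvdI)
  then have "degree U \<in> S" using UV(2) unfolding S_def by auto
  then have LS: "(LEAST k. k \<in> S) \<in> S" "(LEAST k. k \<in> S) \<le> degree U" by (auto intro: LeastI Least_le)
  then obtain W where W: "W \<noteq> 0" "G dvd W * A" "degree W = (LEAST k. k \<in> S)"
    unfolding S_def by auto
  have eW: "degree W < degree G" using LS(2) W(3) UV(3) by simp
  define r where "r = pseudo_mod G W"
  from pseudo_mod[OF W(1), of G, folded r_def] obtain a q where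
    aq: "a \<noteq> 0" "smult a G = W * q + r" and rdeg: "r = 0 \<or> degree r < degree W" by auto
  have rA: "G dvd r * A"
  proof -
    have r_eq: "r = smult a G - W * q" using aq(2) by simp
    have "r * A = smult a (G * A) - q * (W * A)" unfolding r_eq by (simp add: algebra_simps)
    moreover have "G dvd smult a (G * A)" by (intro dvd_smult dvd_triv_left)
    moreover have "G dvd q * (W * A)" using W(2) by (rule dvd_mult)
    ultimately show ?thesis by simp
  qed
  have r0: "r = 0"
  proof (rule ccontr)
    assume "r \<noteq> 0"
    with rdeg have "degree r < degree W" by simp
    moreover have "degree r \<in> S" using \<open>r \<noteq> 0\<close> rA unfolding S_def by auto
    ultimately show False using W(3) by (metis not_less_Least)
  qed
  with aq have eq: "smult a G = W * q" by simp
  from cancel1[OF hh closed irr aq(1) eq] have "degree W = 0 \<or> degree q = 0" .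
  moreover have "degree q \<noteq> 0"
  proof
    assume "degree q = 0"
    have G0: "G \<noteq> 0" using irr by (auto simp: irreducible_def)
    have "q \<noteq> 0" using eq aq(1) G0 by auto
    then have "degree (W * q) = degree W" using W(1) \<open>degree q = 0\<close> by (simp add: degree_mult_eq)
    moreover have "degree (smult a G) = degree G" using aq(1) by simp
    ultimately show False using eq eW by simp
  qed
  ultimately have "degree W = 0" by simp
  then obtain w where w: "W = [:w:]" by (metis degree_0_id)
  with W(1) have w0: "w \<noteq> 0" by simp
  from W(2) obtain Q where "W * A = G * Q" by (rule dvdE)
  then have "smult w A = Q * G" using w by (simp add: mult.commute)
  from cancel2[OF hh closed irr dG w0 this] show ?thesis .
qed


lemma deg_x_le: "degree (coeff P j) \<le> deg_x P"
proof (cases "j \<le> degree P")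
  case True then show ?thesis unfolding deg_x_def by (intro Max_ge, auto)
next
  case False then show ?thesis by (simp add: coeff_eq_0)
qed

lemma deg_x_attained: assumes "P \<noteq> 0" shows "\<exists>j. coeff P j \<noteq> 0 \<and> degree (coeff P j) = deg_x P"
proof -
  have "deg_x P \<in> (\<lambda>j. degree (coeff P j)) ` {..degree P}"
    unfolding deg_x_def by (rule Max_in, auto)
  then obtain j where j: "j \<le> degree P" "degree (coeff P j) = deg_x P" by auto
  show ?thesis
  proof (cases "coeff P j = 0")
    case False then show ?thesis using j by auto
  next
    case True
    then have "deg_x P = 0" using j by simp
    then show ?thesis using assms deg_x_le[of P "degree P"] by (intro exI[of _ "degree P"], auto)
  qed
qed

lemma ev_const: assumes "inj_comm_ring_hom h" shows "eval_poly (phi h n) [:c:] F = phi h n c"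
proof -
  interpret comm_ring_hom "phi h n" using phi_hom[OF assms] .
  show ?thesis by (simp add: eval_poly_as_sum[of "phi h n", OF hom_zero])
qed

lemma main_divides:
  fixes h :: "'a::field_char_0 \<Rightarrow> 'b::field_char_0"
    and G A :: "'a poly poly"
    and n :: nat and Y Ybar Phi :: "'b fls"
    and N :: real
  assumes hh: "inj_comm_ring_hom h"
    and closed: "\<forall>p :: 'b poly. degree p > 0 \<longrightarrow> (\<exists>z. poly p z = 0)"
    and irr: "irreducible G"
    and n_pos: "n \<ge> 1"
    and root: "eval_poly (phi h n) G Y = 0"
    and split: "Y = Ybar + Phi"
    and d1: "degree G \<ge> 1"
    and A_degx: "deg_x A \<le> deg_x G"
    and A_degy: "degree A \<le> degree G"
    and mu: "ordge Y mu" "mu \<le> 0"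
    and ordphi: "ordgt Phi (N * n)"
    and N_pos: "N > 0"
    and N_bound: "N * n \<ge> 2 * real (deg_x G) * real (degree G) * n - 2 * mu * (real (degree G) - 1)"
    and A_ord: "ordgt (eval_poly (phi h n) A Ybar)
         (2 * real (deg_x G) * real (degree G) * n - mu * (real (degree G) - 1))"
  shows "G dvd A"
proof -
  interpret ph: comm_ring_hom "phi h n" using phi_hom[OF hh] .
  interpret ev: comm_ring_hom "\<lambda>P. eval_poly (phi h n) P Y" by (rule eval_poly_hom, unfold_locales)
  define d where "d = degree G"
  define m where "m = degree A"
  define D where "D = deg_x G"
  define T where "T = 2 * real D * real d * n - mu * (real d - 1)"
  have G0: "G \<noteq> 0" using irr by (auto simp: irreducible_def)
  have mud: "real_of_int ((int j - 1) * mu) \<ge> real_of_int ((int d - 1) * mu)" if "j \<le> d" "j \<ge> 1" for j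
    using that mu(2) by (intro of_int_le_iff[THEN iffD2] mult_right_mono_neg, auto)
  have Phimu: "ordge Phi mu"
    using ordphi N_pos n_pos mu(2) unfolding ordge_def ordgt_def
  proof -
    assume "Phi = 0 \<or> N * n < real_of_int (fls_subdegree Phi)"
    moreover have "N * n > 0" using N_pos n_pos by simp
    ultimately show "Phi = 0 \<or> mu \<le> fls_subdegree Phi" using mu(2) by auto
  qed
  have Ybarmu: "ordge Ybar mu" using ordge_diff[OF mu(1) Phimu] split by (simp add: algebra_simps)
  have diff: "eval_poly (phi h n) A Y - eval_poly (phi h n) A Ybar =
        (\<Sum>j\<le>degree A. (Y ^ j - Ybar ^ j) * phi h n (coeff A j))"
    unfolding eval_poly_as_sum[of "phi h n", OF ph.hom_zero] sum_subtractf[symmetric]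
    by (rule sum.cong, auto simp: algebra_simps)
  have "ordgt (eval_poly (phi h n) A Y - eval_poly (phi h n) A Ybar) T"
    unfolding diff
  proof (rule ordgt_sum)
    fix j assume j: "j \<in> {..degree A}"
    show "ordgt ((Y ^ j - Ybar ^ j) * phi h n (coeff A j)) T"
    proof (cases "j = 0")
      case True then show ?thesis by simp
    next
      case False
      have "Y ^ j - Ybar ^ j = (Y - Ybar) * (\<Sum>i<j. Ybar ^ (j - Suc i) * Y ^ i)"
        by (rule power_diff_sumr2)
      also have "Y - Ybar = Phi" using split by simp
      finally have eq: "Y ^ j - Ybar ^ j = Phi * (\<Sum>i<j. Ybar ^ (j - Suc i) * Y ^ i)" .
      have "ordge (\<Sum>i<j. Ybar ^ (j - Suc i) * Y ^ i) ((int j - 1) * mu)"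
      proof (rule ordge_sum)
        fix i assume i: "i \<in> {..<j}"
        have "ordge (Ybar ^ (j - Suc i) * Y ^ i) (int (j - Suc i) * mu + int i * mu)"
          by (rule ordge_mult[OF ordge_power[OF Ybarmu] ordge_power[OF mu(1)]])
        moreover have "int (j - Suc i) * mu + int i * mu = (int j - 1) * mu"
          using i by (simp add: algebra_simps of_nat_diff)
        ultimately show "ordge (Ybar ^ (j - Suc i) * Y ^ i) ((int j - 1) * mu)" by simp
      qed
      from ordgt_mult[OF ordphi this] have
        "ordgt (Y ^ j - Ybar ^ j) (N * n + real_of_int ((int j - 1) * mu))" unfolding eq .
      from ordgt_mult[OF this phi_ordge[OF hh]] have
        "ordgt ((Y ^ j - Ybar ^ j) * phi h n (coeff A j)) (N * n + real_of_int ((int j - 1) * mu))"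
        by simp
      moreover have "N * n + real_of_int ((int j - 1) * mu) \<ge> T"
      proof -
        have "j \<le> d" using j A_degy unfolding d_def by auto
        from mud[OF this] False have "real_of_int ((int j - 1) * mu) \<ge> real_of_int ((int d - 1) * mu)"
          by simp
        moreover have "real_of_int ((int d - 1) * mu) = (real d - 1) * mu" by simp
        ultimately show ?thesis using N_bound unfolding T_def d_def D_def by (simp add: algebra_simps)
      qed
      ultimately show ?thesis by (rule ordgt_mono)
    qed
  qed
  moreover have "ordgt (eval_poly (phi h n) A Ybar) T" using A_ord unfolding T_def d_def D_def .
  ultimately have AY: "ordgt (eval_poly (phi h n) A Y) T"
    using ordgt_add by fastforce
  have cA: "\<And>j. degree (coeff A j) \<le> D" using deg_x_le[of A] A_degx unfolding D_def using le_trans by blast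
  have cG: "\<And>j. degree (coeff G j) \<le> D" using deg_x_le[of G] unfolding D_def .
  from R1[of A m G d] d1 obtain U V where
    UV: "U * A + V * G = [:det (MM A G d m):]" "\<forall>k\<ge>d. coeff U k = 0"
    unfolding m_def d_def by auto
  define r where "r = det (MM A G d m)"
  have degU: "degree U \<le> d - 1" using UV(2) d1 unfolding d_def by (intro degree_le, auto)
  have "phi h n r = eval_poly (phi h n) [:r:] Y" using ev_const[OF hh] by simp
  also have "\<dots> = eval_poly (phi h n) U Y * eval_poly (phi h n) A Y"
    unfolding UV(1)[folded r_def, symmetric] ev.hom_add ev.hom_mult root by simp
  finally have pr: "phi h n r = eval_poly (phi h n) A Y * eval_poly (phi h n) U Y" by simp
  have "ordge (eval_poly (phi h n) U Y) (int (d - 1) * mu)" by (rule ev_ordge[OF hh degU mu])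
  from ordgt_mult[OF AY this] have "ordgt (phi h n r) (T + real_of_int (int (d - 1) * mu))"
    unfolding pr .
  moreover have "T + real_of_int (int (d - 1) * mu) = 2 * real D * real d * n"
    unfolding T_def using d1 unfolding d_def by (simp add: of_nat_diff algebra_simps)
  ultimately have ordr: "ordgt (phi h n r) (2 * real D * real d * n)" by simp
  have r0: "r = 0"
  proof (rule ccontr)
    assume "r \<noteq> 0"
    from phi_nz[OF hh n_pos this] have "phi h n r \<noteq> 0" "fls_subdegree (phi h n r) \<le> int (n * degree r)" .
    moreover have "degree r \<le> D * (d + m)" unfolding r_def by (rule R3[OF cA cG])
    moreover have "m \<le> d" using A_degy unfolding m_def d_def .
    ultimately have "real_of_int (fls_subdegree (phi h n r)) \<le> real n * (real D * (real d + real d))"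
    proof -
      assume a: "fls_subdegree (phi h n r) \<le> int (n * degree r)" "degree r \<le> D * (d + m)" "m \<le> d"
      have "D * (d + m) \<le> D * (d + d)" using a(3) by (intro mult_le_mono2, simp)
      then have "n * degree r \<le> n * (D * (d + d))" using a(2)
        by (intro mult_le_mono2, linarith)
      with a(1) have "fls_subdegree (phi h n r) \<le> int (n * (D * (d + d)))" by linarith
      then have "real_of_int (fls_subdegree (phi h n r)) \<le> real (n * (D * (d + d)))"
        by (metis of_int_le_iff of_int_of_nat_eq)
      then show ?thesis by simp
    qed
    with ordr \<open>phi h n r \<noteq> 0\<close> show False unfolding ordgt_def by (simp add: algebra_simps)
  qed
  from R2[of A m G d] G0 r0 obtain U' V' where
    UV': "U' * A + V' * G = 0" "U' \<noteq> 0" "\<forall>k\<ge>d. coeff U' k = 0"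
    unfolding m_def d_def r_def by auto
  have "coeff U' (degree U') \<noteq> 0" using UV'(2) by simp
  then have "degree U' < degree G" using UV'(3) unfolding d_def by (meson not_less)
  then show "G dvd A" by (rule final_dvd[OF hh closed irr d1 UV'(1,2)])
qed


lemma conclude:
  fixes G A :: "'a::field poly poly"
  assumes dvd: "G dvd A" and A0: "A \<noteq> 0" and G0: "G \<noteq> 0"
    and dx: "deg_x A \<le> deg_x G" and dy: "degree A \<le> degree G"
  shows "\<exists>c. c \<noteq> 0 \<and> A = smult [:c:] G"
proof -
  from dvd obtain q where q: "A = G * q" by (rule dvdE)
  with A0 have q0: "q \<noteq> 0" by auto
  have "degree A = degree G + degree q" using q q0 G0 by (simp add: degree_mult_eq)
  with dy have "degree q = 0" by simp
  then obtain q0 where q0d: "q = [:q0:]" by (metis degree_0_id)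
  with q0 have q00: "q0 \<noteq> 0" by simp
  have Aq: "A = smult q0 G" using q q0d by (simp add: mult.commute)
  from deg_x_attained[OF G0] obtain j where j: "coeff G j \<noteq> 0" "degree (coeff G j) = deg_x G" by auto
  have "degree (coeff A j) = degree q0 + deg_x G" unfolding Aq using j q00 by (simp add: degree_mult_eq)
  with deg_x_le[of A j] dx have "degree q0 = 0" by simp
  then obtain c where "q0 = [:c:]" by (metis degree_0_id)
  with q00 Aq show ?thesis by auto
qed

theorem lemma4:
  fixes h :: "'a::field_char_0 \<Rightarrow> 'b::field_char_0"
    and G A :: "'a poly poly"
    and n :: nat and Y Ybar Phi :: "'b fls"
    and N :: real
  assumes closure: "is_alg_closure_emb h"
    and irr: "irreducible G"
    and n_pos: "n \<ge> 1"
    and root: "eval_puiseux h n G Y = 0"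
    and split: "Y = Ybar + Phi"
    and ordphi: "ord_x n Phi > ereal N"
    and N_pos: "N > 0"
    and N_bound: "ereal N \<ge> 2 * real (deg_x G) * real (deg_y G)
                     - 2 * min (ord_x n Y) 0 * (real (deg_y G) - 1)"
    and A_nz: "A \<noteq> 0"
    and A_degx: "deg_x A \<le> deg_x G"
    and A_degy: "deg_y A \<le> deg_y G"
    and A_ord: "ord_x n (eval_puiseux h n A Ybar) >
                  2 * real (deg_x G) * real (deg_y G) - min (ord_x n Y) 0 * (real (deg_y G) - 1)"
    and A_min: "\<And>B. B \<noteq> 0 \<Longrightarrow> deg_x B \<le> deg_x G \<Longrightarrow> deg_y B \<le> deg_y G \<Longrightarrow>
                  ord_x n (eval_puiseux h n B Ybar) >
                    2 * real (deg_x G) * real (deg_y G) - min (ord_x n Y) 0 * (real (deg_y G) - 1)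
                  \<Longrightarrow> tot_deg A \<le> tot_deg B"
  shows "\<exists>c. c \<noteq> 0 \<and> A = smult [:c:] G"
proof -
  have hh: "inj_comm_ring_hom h" by (rule emb_hom[OF closure])
  have closed: "\<forall>p :: 'b poly. degree p > 0 \<longrightarrow> (\<exists>z. poly p z = 0)"
    using closure unfolding is_alg_closure_emb_def by blast
  have G0: "G \<noteq> 0" using irr by (auto simp: irreducible_def)
  have root': "eval_poly (phi h n) G Y = 0" using root unfolding eval_puiseux_eq[OF hh] .
  have d1: "degree G \<ge> 1"
  proof (rule ccontr)
    assume "\<not> degree G \<ge> 1"
    then have "degree G = 0" by simp
    then obtain g where g: "G = [:g:]" by (metis degree_0_id)
    with G0 have "g \<noteq> 0" by simp
    from phi_nz(1)[OF hh n_pos this] root' g ev_const[OF hh] show False by simp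
  qed
  define mu where "mu = (if Y = 0 then 0 else min (fls_subdegree Y) 0)"
  have mu: "ordge Y mu" "mu \<le> 0" unfolding mu_def ordge_def by auto
  have npos: "real n > 0" using n_pos by simp
  have minY: "min (ord_x n Y) 0 = ereal (real_of_int mu / real n)"
  proof (cases "Y = 0")
    case True then show ?thesis unfolding mu_def ord_x_def by simp
  next
    case False
    then have o: "ord_x n Y = ereal (real_of_int (fls_subdegree Y) / real n)" unfolding ord_x_def by simp
    have e: "min (ereal x) 0 = ereal (min x 0)" for x :: real by (auto simp: min_def)
    have m: "min (real_of_int (fls_subdegree Y) / real n) 0 = real_of_int mu / real n"
      using False npos unfolding mu_def
      by (cases "fls_subdegree Y \<le> 0") (auto simp: min_def divide_le_0_iff)
    show ?thesis unfolding o e m ..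
  qed
  define D where "D = deg_x G"
  define d where "d = degree G"
  have ordphi': "ordgt Phi (N * n)"
  proof (cases "Phi = 0")
    case False
    with ordphi have "N < real_of_int (fls_subdegree Phi) / real n" unfolding ord_x_def by simp
    then show ?thesis using npos unfolding ordgt_def by (simp add: field_simps)
  qed (simp add: ordgt_def)
  have "N \<ge> 2 * real D * real d - 2 * (real_of_int mu / real n) * (real d - 1)"
    using N_bound unfolding minY D_def d_def by simp
  then have N_bound': "N * n \<ge> 2 * real D * real d * n - 2 * real_of_int mu * (real d - 1)"
    using npos by (simp add: field_simps)
  have A_ord': "ordgt (eval_poly (phi h n) A Ybar) (2 * real D * real d * n - mu * (real d - 1))"
  proof (cases "eval_poly (phi h n) A Ybar = 0")
    case False
    from A_ord have A1: "ord_x n (eval_poly (phi h n) A Ybar) >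
        2 * real D * real d - ereal (real_of_int mu / real n) * (real d - 1)"
      unfolding minY eval_puiseux_eq[OF hh] D_def d_def .
    from A1 have "2 * real D * real d - (real_of_int mu / real n) * (real d - 1) <
       real_of_int (fls_subdegree (eval_poly (phi h n) A Ybar)) / real n"
      unfolding ord_x_def using False by simp
    then have "(2 * real D * real d - (real_of_int mu / real n) * (real d - 1)) * real n <
       real_of_int (fls_subdegree (eval_poly (phi h n) A Ybar))"
      using npos by (simp add: pos_less_divide_eq)
    moreover have "(2 * real D * real d - (real_of_int mu / real n) * (real d - 1)) * real n
       = 2 * real D * real d * n - mu * (real d - 1)" using npos by (simp add: field_simps)
    ultimately show ?thesis unfolding ordgt_def by simp
  qed (simp add: ordgt_def)
  have "G dvd A"
    by (rule main_divides[OF hh closed irr n_pos root' split d1 A_degx A_degy mu ordphi' N_pos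
          N_bound'[unfolded D_def d_def] A_ord'[unfolded D_def d_def]])
  then show ?thesis using conclude A_nz G0 A_degx A_degy by blast
qed


end
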